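(* Let $k>0$, $M>0$, $\beta\in\,]0,\tfrac12[$ and $P_0=\max\{10,(\frac{1+M}{4\pi})^{4/3},\frac{64(k+1)^2}{1-2\beta},\frac{256(k+1)^2M^4}{(1-2\beta)^2}\}$. Let $f\ge0$ be spherically symmetric with $f\in\tilde{\mathcal A}_{M,\beta}$. Then there is a spherically symmetric function $\tilde f\ge0$ such that $\rho_{\tilde f}=\rho_f$ (in particular $\tilde f\in\tilde{\mathcal A}_{M,\beta}$), $\mathcal D(\tilde f)\le\mathcal D(f)$, $\tilde f(x,v)\le1$ for all $(x,v)$, and $$\int_{\mathbb R^3}\int_{|v|\ge P+1}\sqrt{1+|v|^2}\,\tilde f\,dx\,dv\le\frac{2}{P^{1/4}}\quad\text{for all } P\ge P_0+1.$$
   Context: Let $\chi(s)=\frac{k}{k+1}s^{1+1/k}$. A measurable $f\ge0$ on $\mathbb R^3\times\mathbb R^3$ is spherically symmetric if $f(Ax,Av)=f(x,v)$ for all $A\in SO(3)$. For such $f$: $\rho_f(x)=\int\sqrt{1+|v|^2}f(x,v)\,dv$ (radial, written $\rho_f(r)$), $m_f(r)=\int_{|x|\le r}\int\sqrt{1+|v|^2}f\,dx\,dv$, $\lambda_f$ given by $e^{-2\lambda_f(r)}=1-2m_f(r)/r$, and $\mathcal D(f)=\int\int e^{\lambda_f(|x|)}(\chi(f)-f)\,dx\,dv$. $\tilde{\mathcal A}_{M,\beta}$ is the set of measurable spherically symmetric $f\ge0$ with $\int\int\sqrt{1+|v|^2}f\,dx\,dv=M$, $m_f(r)/r\le\beta$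 for $r\in\,]0,\infty[$, and $\rho_f(r)\le1$ for $r\in[0,\infty[$. *)

theory Defs
  imports "HOL-Analysis.Analysis"
begin

type_synonym phase = "real^3 \<Rightarrow> real^3 \<Rightarrow> real"

definition chi :: "real \<Rightarrow> real \<Rightarrow> real" where
  "chi k s = k / (k + 1) * s powr (1 + 1 / k)"

definition SO3 :: "(real^3^3) set" where
  "SO3 = {A. orthogonal_matrix A \<and> det A = 1}"

definition sph_sym :: "phase \<Rightarrow> bool" where
  "sph_sym f \<longleftrightarrow> (\<forall>A\<in>SO3. \<forall>x v. f (A *v x) (A *v v) = f x v)"

definition meas_phase :: "phase \<Rightarrow> bool" where
  "meas_phase f \<longleftrightarrow> (\<lambda>(x, v). f x v) \<in> borel_measurable borel"

definition rho :: "phase \<Rightarrow> real^3 \<Rightarrow> ennreal" where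
  "rho f x = (\<integral>\<^sup>+ v. ennreal (sqrt (1 + (norm v)\<^sup>2) * f x v) \<partial>lborel)"

definition mass_in :: "phase \<Rightarrow> real \<Rightarrow> ennreal" where
  "mass_in f r = (\<integral>\<^sup>+ x. indicator (cball 0 r) x * rho f x \<partial>lborel)"

definition total_mass :: "phase \<Rightarrow> ennreal" where
  "total_mass f = (\<integral>\<^sup>+ x. rho f x \<partial>lborel)"

text \<open>e^{lambda_f(r)}, where e^{-2 lambda_f(r)} = 1 - 2 m_f(r)/r (r > 0); value 1 at r = 0.\<close>
definition exp_lambda :: "phase \<Rightarrow> real \<Rightarrow> real" where
  "exp_lambda f r = (if r > 0 then 1 / sqrt (1 - 2 * enn2real (mass_in f r) / r) else 1)"

text \<open>D(f) = int int e^{lambda_f(|x|)} (chi(f) - f) dx dv, as an extended real: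
  (integral of the nonnegative part e^lambda chi(f)) minus (integral of e^lambda f).\<close>
definition Dfun :: "real \<Rightarrow> phase \<Rightarrow> ereal" where
  "Dfun k f =
     enn2ereal (\<integral>\<^sup>+ x. \<integral>\<^sup>+ v. ennreal (exp_lambda f (norm x) * chi k (f x v)) \<partial>lborel \<partial>lborel)
   - enn2ereal (\<integral>\<^sup>+ x. \<integral>\<^sup>+ v. ennreal (exp_lambda f (norm x) * f x v) \<partial>lborel \<partial>lborel)"

definition Aset :: "real \<Rightarrow> real \<Rightarrow> phase set" where
  "Aset M \<beta> = {f. meas_phase f \<and> sph_sym f \<and> (\<forall>x v. f x v \<ge> 0)
      \<and> total_mass f = ennreal M
      \<and> (\<forall>r>0. mass_in f r \<le> ennreal (\<beta> * r))
      \<and> (\<forall>x. rho f x \<le> 1)}"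

definition P0 :: "real \<Rightarrow> real \<Rightarrow> real \<Rightarrow> real" where
  "P0 k M \<beta> = max (max 10 (((1 + M) / (4 * pi)) powr (4/3)))
                    (max (64 * (k + 1)\<^sup>2 / (1 - 2 * \<beta>))
                         (256 * (k + 1)\<^sup>2 * M ^ 4 / (1 - 2 * \<beta>)\<^sup>2))"

end

theory Submission
  imports Defs
begin


lemma lborel_orth:
  fixes A :: "real^3^3"
  assumes A: "orthogonal_matrix A"
  shows "distr lborel borel ((*v) A) = lborel"
proof -
  have ot: "orthogonal_transformation ((*v) (transpose A))"
    using A by (simp add: orthogonal_transformation_matrix orthogonal_matrix_transpose)
  have TA: "transpose A ** A = mat 1" using A by (simp add: orthogonal_matrix_def)
  have AT: "A ** transpose A = mat 1" using A by (simp add: orthogonal_matrix_def)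
  have meas: "((*v) A) \<in> borel_measurable borel"
    by (intro borel_measurable_continuous_onI linear_continuous_on) (simp add: linear_conv_bounded_linear[symmetric] matrix_vector_mul_linear)
  have inv1: "transpose A *v (A *v x) = x" for x using TA by (metis matrix_vector_mul_assoc matrix_vector_mul_lid)
  have inv2: "A *v (transpose A *v x) = x" for x using AT by (metis matrix_vector_mul_assoc matrix_vector_mul_lid)
  have pre: "((*v) A) -` S = (*v) (transpose A) ` S" for S :: "(real^3) set"
  proof (rule set_eqI)
    fix x
    show "x \<in> ((*v) A) -` S \<longleftrightarrow> x \<in> (*v) (transpose A) ` S"
      by (metis (no_types, lifting) image_iff inv1 inv2 vimage_eq)
  qed
  have "lborel = distr lborel borel ((*v) A)"
  proof (rule lborel_eqI)
    fix l u :: "real^3"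
    assume lu: "\<And>b. b \<in> Basis \<Longrightarrow> l \<bullet> b \<le> u \<bullet> b"
    have bs: "box l u \<in> sets borel" by simp
    have s1: "((*v) A) -` box l u \<in> sets borel" using meas bs by (simp add: measurable_sets_borel)
    have lm: "(*v) (transpose A) ` box l u \<in> lmeasurable"
      by (rule measurable_orthogonal_image[OF ot]) simp
    have "emeasure (distr lborel borel ((*v) A)) (box l u) = emeasure lborel (((*v) A) -` box l u)"
      using meas by (simp add: emeasure_distr)
    also have "\<dots> = emeasure lebesgue (((*v) A) -` box l u)"
      using s1 by (simp add: emeasure_completion main_part_sets)
    also have "\<dots> = ennreal (measure lebesgue ((*v) (transpose A) ` box l u))"
      using lm unfolding pre by (simp add: emeasure_eq_measure2 fmeasurableD2)
    also have "\<dots> = ennreal (measure lebesgue (box l u))"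
      using measure_orthogonal_image[OF ot, of "box l u"] by simp
    also have "\<dots> = emeasure lborel (box l u)"
      by (simp add: emeasure_eq_measure2 fmeasurableD2 emeasure_completion main_part_sets)
    also have "\<dots> = (\<Prod>b\<in>Basis. (u - l) \<bullet> b)"
      using lu by (simp add: emeasure_lborel_box_eq)
    finally show "emeasure (distr lborel borel ((*v) A)) (box l u) = (\<Prod>b\<in>Basis. (u - l) \<bullet> b)" .
  qed simp
  then show ?thesis by simp
qed



definition sv :: "real^3 \<Rightarrow> real" where "sv v = sqrt (1 + (norm v)\<^sup>2)"

lemma sv_ge1: "sv v \<ge> 1" by (simp add: sv_def)
lemma sv_ge_norm: "sv v \<ge> norm v" unfolding sv_def by (simp add: real_le_rsqrt)
lemma sv_meas[measurable]: "sv \<in> borel_measurable borel"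
  unfolding sv_def by (intro borel_measurable_continuous_onI continuous_intros)

lemma meas_pair: "meas_phase f \<Longrightarrow> (\<lambda>(x,v). f x v) \<in> borel_measurable (lborel \<Otimes>\<^sub>M lborel)"
  by (simp add: lborel_prod meas_phase_def)

lemma meas_slice: "meas_phase f \<Longrightarrow> f y \<in> borel_measurable borel"
  using measurable_Pair2[OF meas_pair[of f], of y] by simp

lemma rho_meas: assumes "meas_phase f" shows "rho f \<in> borel_measurable borel"
proof -
  have "(\<lambda>(x,v). ennreal (sv v * f x v)) \<in> borel_measurable (lborel \<Otimes>\<^sub>M lborel)"
    using meas_pair[OF assms] by measurable
  then have "(\<lambda>x. \<integral>\<^sup>+ v. ennreal (sv v * f x v) \<partial>lborel) \<in> borel_measurable lborel"
    by (rule lborel.borel_measurable_nn_integral)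
  then show ?thesis unfolding rho_def sv_def by simp
qed

lemma SO3_orth: "A \<in> SO3 \<Longrightarrow> orthogonal_transformation ((*v) A)"
  by (simp add: SO3_def orthogonal_transformation_matrix)

lemma norm_rot: "A \<in> SO3 \<Longrightarrow> norm (A *v v) = norm v"
  using SO3_orth orthogonal_transformation_norm by blast

lemma nn_integral_rot:
  assumes A: "A \<in> SO3" and h: "h \<in> borel_measurable borel"
  shows "(\<integral>\<^sup>+ v. h (A *v v) \<partial>lborel) = (\<integral>\<^sup>+ v. h v \<partial>lborel)"
proof -
  have orth: "orthogonal_matrix A" using A by (simp add: SO3_def)
  have meas: "((*v) A) \<in> borel \<rightarrow>\<^sub>M borel"
    by (intro borel_measurable_continuous_onI linear_continuous_on) (simp add: linear_conv_bounded_linear[symmetric] matrix_vector_mul_linear)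
  have "(\<integral>\<^sup>+ v. h v \<partial>lborel) = (\<integral>\<^sup>+ v. h v \<partial>distr lborel borel ((*v) A))"
    using lborel_orth[OF orth] by simp
  also have "\<dots> = (\<integral>\<^sup>+ v. h (A *v v) \<partial>lborel)"
    using meas h by (subst nn_integral_distr) auto
  finally show ?thesis by simp
qed

lemma rho_rot:
  assumes "sph_sym f" "meas_phase f" "A \<in> SO3"
  shows "rho f (A *v x) = rho f x"
proof -
  have "rho f (A *v x) = (\<integral>\<^sup>+ v. ennreal (sv (A *v v) * f (A *v x) (A *v v)) \<partial>lborel)"
    unfolding rho_def sv_def
    by (rule nn_integral_rot[symmetric, OF assms(3)]) (use meas_slice[OF assms(2)] in measurable)
  also have "\<dots> = rho f x"
    using assms(1,3) unfolding rho_def sph_sym_def sv_def by (simp add: norm_rot)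
  finally show ?thesis .
qed



definition mu0 :: "real \<Rightarrow> real" where "mu0 k = 1 / (8 * (k + 1))"
definition prof :: "real \<Rightarrow> real \<Rightarrow> real^3 \<Rightarrow> real" where
  "prof k \<mu> v = (max 0 (1 - \<mu> * sv v)) powr k"
definition FF :: "real \<Rightarrow> real \<Rightarrow> real" where
  "FF k \<mu> = (LINT v|lborel. sv v * prof k \<mu> v)"

lemma mu0_pos: "k > 0 \<Longrightarrow> mu0 k > 0" by (simp add: mu0_def)
lemma mu0_le1: "k > 0 \<Longrightarrow> mu0 k \<le> 1" by (simp add: mu0_def)

lemma prof_nonneg: "prof k \<mu> v \<ge> 0" by (simp add: prof_def)

lemma prof_le1: assumes "k > 0" "\<mu> \<ge> 0" shows "prof k \<mu> v \<le> 1"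
proof -
  have "max 0 (1 - \<mu> * sv v) \<le> 1" using assms sv_ge1[of v] by (simp add: mult_nonneg_nonneg)
  then show ?thesis unfolding prof_def using assms
    by (smt (verit, ccfv_SIG) powr_le1 powr_zero_eq_one)
qed

lemma prof_zero: "\<mu> * sv v \<ge> 1 \<Longrightarrow> prof k \<mu> v = 0"
  by (simp add: prof_def)

lemma prof_meas[measurable]: "prof k \<mu> \<in> borel_measurable borel"
  unfolding prof_def by measurable

lemma prof_bound:
  assumes k: "k > 0" and m: "\<mu> \<ge> m" and m0: "m > 0"
  shows "sv v * prof k \<mu> v \<le> (1/m) * indicator (cball 0 (1/m)) v"
proof (cases "\<mu> * sv v \<ge> 1")
  case True then show ?thesis using m0 by (simp add: prof_zero)
next
  case False
  have "m * sv v \<le> \<mu> * sv v" using m sv_ge1[of v] by (simp add: mult_right_mono)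
  then have "m * sv v < 1" using False by simp
  then have s: "sv v < 1/m" using m0 by (simp add: field_simps)
  then have "norm v \<le> 1/m" using sv_ge_norm[of v] by simp
  then have ind: "indicator (cball 0 (1/m)) v = (1::real)" by (simp add: indicator_def)
  have "sv v * prof k \<mu> v \<le> sv v * 1"
    using prof_le1[OF k, of \<mu> v] m m0 sv_ge1[of v] by (intro mult_left_mono) auto
  then show ?thesis using s ind by simp
qed

lemma integrable_prof:
  assumes k: "k > 0" and m: "\<mu> \<ge> m" and m0: "m > 0"
  shows "integrable lborel (\<lambda>v. sv v * prof k \<mu> v)"
proof (rule Bochner_Integration.integrable_bound)
  show "integrable lborel (\<lambda>v. (1/m) * indicator (cball (0::real^3) (1/m)) v)"
    using emeasure_lborel_cball_finite[of "0::real^3" "1/m"]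
    by (intro integrable_mult_right integrable_real_indicator) simp_all
  show "(\<lambda>v. sv v * prof k \<mu> v) \<in> borel_measurable lborel" by simp
  show "AE v in lborel. norm (sv v * prof k \<mu> v) \<le> norm ((1/m) * indicator (cball (0::real^3) (1/m)) v)"
    using prof_bound[OF assms] m0 sv_ge1 prof_nonneg
    by (intro AE_I2) (smt (verit) mult_nonneg_nonneg real_norm_def)
qed

lemma FF_cont: assumes k: "k > 0" shows "continuous_on {mu0 k..1} (FF k)"
  unfolding continuous_on_sequentially
proof (intro allI ballI impI, elim conjE)
  fix x :: "nat \<Rightarrow> real" and a
  assume x: "\<forall>n. x n \<in> {mu0 k..1}" and lim: "x \<longlonglongrightarrow> a" and a: "a \<in> {mu0 k..1}"
  have m0: "mu0 k > 0" using mu0_pos[OF k] .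
  show "(FF k \<circ> x) \<longlonglongrightarrow> FF k a"
    unfolding comp_def FF_def
  proof (rule integral_dominated_convergence[where w="\<lambda>v. (1/mu0 k) * indicator (cball 0 (1/mu0 k)) v"])
    show "(\<lambda>v. sv v * prof k a v) \<in> borel_measurable lborel" by simp
    show "(\<lambda>v. sv v * prof k (x i) v) \<in> borel_measurable lborel" for i by simp
    show "integrable lborel (\<lambda>v. (1/mu0 k) * indicator (cball (0::real^3) (1/mu0 k)) v)"
      using emeasure_lborel_cball_finite[of "0::real^3" "1/mu0 k"]
      by (intro integrable_mult_right integrable_real_indicator) simp_all
    show "AE v in lborel. (\<lambda>i. sv v * prof k (x i) v) \<longlonglongrightarrow> sv v * prof k a v"
    proof (intro AE_I2 tendsto_mult tendsto_const)
      fix v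
      show "(\<lambda>i. prof k (x i) v) \<longlonglongrightarrow> prof k a v"
        unfolding prof_def
        by (rule tendsto_powr') (use k in \<open>auto intro!: tendsto_intros lim\<close>)
    qed
    show "AE v in lborel. norm (sv v * prof k (x i) v) \<le> (1/mu0 k) * indicator (cball 0 (1/mu0 k)) v" for i
      using prof_bound[OF k _ m0, of "x i"] x sv_ge1 prof_nonneg
      by (intro AE_I2) (smt (verit) atLeastAtMost_iff mult_nonneg_nonneg real_norm_def)
  qed
qed

lemma FF_one: "FF k 1 = 0"
proof -
  have "prof k 1 v = 0" for v using sv_ge1[of v] by (simp add: prof_zero)
  then show ?thesis by (simp add: FF_def)
qed

lemma FF_nonneg: "FF k \<mu> \<ge> 0"
  unfolding FF_def using sv_ge1 prof_nonneg
  by (intro integral_nonneg_AE AE_I2) (smt (verit) mult_nonneg_nonneg)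

lemma cube_norm: "(v::real^3) \<in> cbox (vec (-1)) (vec 1) \<Longrightarrow> norm v \<le> 3"
proof -
  assume v: "v \<in> cbox (vec (-1)) (vec 1)"
  have "\<bar>v $ i\<bar> \<le> 1" for i using v unfolding mem_box_cart by (simp add: abs_le_iff)
  then have "(\<Sum>i\<in>UNIV. \<bar>v $ i\<bar>) \<le> (\<Sum>i\<in>(UNIV::3 set). 1)" by (intro sum_mono) auto
  then show ?thesis using norm_le_l1_cart[of v] by simp
qed

lemma prof_cube:
  assumes k: "k > 0" and v: "v \<in> cbox (vec (-1)) (vec 1)"
  shows "prof k (mu0 k) v \<ge> 1/3"
proof -
  have n3: "norm v \<le> 3" using cube_norm[OF v] .
  have "(norm v)\<^sup>2 \<le> 3\<^sup>2" using n3 norm_ge_zero[of v] by (rule power_mono)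
  then have "1 + (norm v)\<^sup>2 \<le> 4\<^sup>2" by simp
  then have "sqrt (1 + (norm v)\<^sup>2) \<le> sqrt (4\<^sup>2)" by (rule real_sqrt_le_mono)
  then have s4: "sv v \<le> 4" unfolding sv_def by simp
  define c where "c = 1 - mu0 k * sv v"
  have m0: "mu0 k > 0" using mu0_pos[OF k] .
  have "mu0 k * sv v \<le> mu0 k * 4" using s4 m0 by simp
  also have "mu0 k * 4 = 1 / (2 * (k + 1))" unfolding mu0_def using k by (simp add: field_simps)
  finally have c1: "1 - c \<le> 1 / (2 * (k + 1))" unfolding c_def by simp
  have "1 / (2 * (k + 1)) \<le> 1/2" using k by (simp add: field_simps)
  then have c2: "c \<ge> 1/2" using c1 by linarith
  have c0: "1 - c \<ge> 0" unfolding c_def using m0 sv_ge1[of v] by simp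
  have lnc: "ln c \<ge> 1 - 1/c"
    using ln_le_minus_one[of "1/c"] c2 by (simp add: ln_div)
  have e1: "1 - 1/c = -((1-c)/c)" using c2 by (simp add: field_simps)
  have "(1-c)/c \<le> (1-c)/(1/2)" using c0 c2 by (intro divide_left_mono) auto
  then have "(1-c)/c \<le> 2 * (1-c)" by simp
  also have "2 * (1-c) \<le> 1/(k+1)" using c1 k by (simp add: field_simps)
  finally have lc: "ln c \<ge> - (1/(k+1))" using lnc e1 by linarith
  have "k * ln c \<ge> k * (- (1/(k+1)))" using k lc by (intro mult_left_mono) auto
  moreover have "k * (- (1/(k+1))) \<ge> -1" using k by (simp add: field_simps)
  ultimately have kl: "k * ln c \<ge> -1" by linarith
  have "prof k (mu0 k) v = c powr k"
    unfolding prof_def c_def[symmetric] using c2 by simp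
  also have "c powr k = exp (k * ln c)" using c2 by (simp add: powr_def mult.commute)
  finally have pe: "prof k (mu0 k) v = exp (k * ln c)" .
  have "exp (-1) \<le> exp (k * ln c)" using kl by simp
  moreover have "exp (-1) \<ge> (1/3::real)" using exp_le by (simp add: exp_minus field_simps)
  ultimately show ?thesis using pe by linarith
qed

lemma FF_mu0: assumes k: "k > 0" shows "FF k (mu0 k) \<ge> 1"
proof -
  have int1: "integrable lborel (\<lambda>v. (1/3::real) * indicator (cbox (vec (-1)) (vec 1::real^3)) v)"
    using emeasure_lborel_cbox_finite[of "vec (-1)::real^3" "vec 1"]
    by (intro integrable_mult_right integrable_real_indicator) simp_all
  have low: "(LINT v|lborel. (1/3::real) * indicator (cbox (vec (-1)) (vec 1::real^3)) v) \<le> FF k (mu0 k)"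
    unfolding FF_def
  proof (rule integral_mono[OF int1 integrable_prof[OF k order_refl mu0_pos[OF k]]])
    fix v :: "real^3"
    show "(1/3) * indicator (cbox (vec (-1)) (vec 1)) v \<le> sv v * prof k (mu0 k) v"
    proof (cases "v \<in> cbox (vec (-1)) (vec 1)")
      case True
      then have "1/3 \<le> prof k (mu0 k) v" using prof_cube[OF k] by blast
      also have "\<dots> \<le> sv v * prof k (mu0 k) v" using sv_ge1[of v] prof_nonneg[of k "mu0 k" v]
        by (simp add: mult_le_cancel_right1)
      finally show ?thesis using True by simp
    next
      case False then show ?thesis using sv_ge1[of v] prof_nonneg[of k "mu0 k" v] by simp
    qed
  qed
  have "(0::real^3) \<in> cbox (vec (-1)) (vec 1)" by (simp add: mem_box_cart)
  then have ne: "cbox (vec (-1)) (vec 1::real^3) \<noteq> {}" by blast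
  have vol: "measure lborel (cbox (vec (-1)) (vec 1::real^3)) = 8"
    by (subst content_cbox_cart[OF ne]) simp
  have "(LINT v|lborel. (1/3::real) * indicator (cbox (vec (-1)) (vec 1::real^3)) v) = 8/3"
    using vol by simp
  with low show ?thesis by simp
qed



definition clmp :: "real \<Rightarrow> real" where "clmp y = max 0 (min 1 y)"

definition Phi :: "real \<Rightarrow> real \<Rightarrow> real" where
  "Phi k y = Inf {\<mu> \<in> {mu0 k..1}. FF k \<mu> \<le> clmp y}"

lemma Phi_set:
  assumes k: "k > 0"
  shows "{\<mu> \<in> {mu0 k..1}. FF k \<mu> \<le> clmp y} \<noteq> {}"
    "bdd_below {\<mu> \<in> {mu0 k..1}. FF k \<mu> \<le> clmp y}"
    "closed {\<mu> \<in> {mu0 k..1}. FF k \<mu> \<le> clmp y}"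
proof -
  show "{\<mu> \<in> {mu0 k..1}. FF k \<mu> \<le> clmp y} \<noteq> {}"
    using mu0_le1[OF k] FF_one[of k] by (auto simp: clmp_def intro!: exI[of _ 1])
  show "bdd_below {\<mu> \<in> {mu0 k..1}. FF k \<mu> \<le> clmp y}" by (rule bdd_belowI[of _ "mu0 k"]) auto
  have "closed {\<mu> \<in> {mu0 k..1}. FF k \<mu> \<in> {..clmp y}}"
    using continuous_closed_preimage[OF FF_cont[OF k], of "{..clmp y}"]
    by (simp add: vimage_def Int_def conj_commute)
  then show "closed {\<mu> \<in> {mu0 k..1}. FF k \<mu> \<le> clmp y}" by simp
qed

lemma Phi_props:
  assumes k: "k > 0"
  shows "Phi k y \<in> {mu0 k..1}" "FF k (Phi k y) = clmp y"
proof -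
  have mem: "Phi k y \<in> {\<mu> \<in> {mu0 k..1}. FF k \<mu> \<le> clmp y}"
    unfolding Phi_def using Phi_set[OF k] by (rule closed_contains_Inf)
  then show "Phi k y \<in> {mu0 k..1}" by simp
  have c01: "clmp y \<le> 1" "clmp y \<ge> 0" by (auto simp: clmp_def)
  have "\<exists>x\<ge>mu0 k. x \<le> Phi k y \<and> FF k x = clmp y"
  proof (rule IVT2')
    show "FF k (Phi k y) \<le> clmp y" using mem by simp
    show "clmp y \<le> FF k (mu0 k)" using FF_mu0[OF k] c01 by simp
    show "mu0 k \<le> Phi k y" using mem by simp
    show "continuous_on {mu0 k..Phi k y} (FF k)"
      by (rule continuous_on_subset[OF FF_cont[OF k]]) (use mem in auto)
  qed
  then obtain x where x: "x \<ge> mu0 k" "x \<le> Phi k y" "FF k x = clmp y" by blast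
  have "x \<le> 1" using x mem by simp
  then have "Phi k y \<le> x" unfolding Phi_def using x Phi_set[OF k]
    by (intro cInf_lower) auto
  then show "FF k (Phi k y) = clmp y" using x by simp
qed

lemma Phi_antimono:
  assumes k: "k > 0" and le: "y1 \<le> y2"
  shows "Phi k y2 \<le> Phi k y1"
  unfolding Phi_def
proof (rule cInf_superset_mono)
  show "{\<mu> \<in> {mu0 k..1}. FF k \<mu> \<le> clmp y1} \<noteq> {}" using Phi_set[OF k] by blast
  show "bdd_below {\<mu> \<in> {mu0 k..1}. FF k \<mu> \<le> clmp y2}" by (rule Phi_set(2)[OF k])
  have "clmp y1 \<le> clmp y2" using le by (auto simp: clmp_def)
  then show "{\<mu> \<in> {mu0 k..1}. FF k \<mu> \<le> clmp y1} \<subseteq> {\<mu> \<in> {mu0 k..1}. FF k \<mu> \<le> clmp y2}"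
    by auto
qed

lemma Phi_meas:
  assumes k: "k > 0"
  shows "Phi k \<in> borel_measurable borel"
proof -
  have "mono (\<lambda>y. Phi k (- y))"
    by (rule monoI) (simp add: Phi_antimono[OF k])
  then have m: "(\<lambda>y. Phi k (- y)) \<in> borel_measurable borel" by (rule borel_measurable_mono)
  have "(\<lambda>y. (\<lambda>y. Phi k (- y)) (- y)) \<in> borel_measurable borel"
    by (rule measurable_compose[OF _ m]) simp
  then show ?thesis by simp
qed

lemma young_chi:
  assumes k: "k > 0" and h: "h \<ge> 0"
  shows "chi k ((max 0 c) powr k) - c * (max 0 c) powr k \<le> chi k h - c * h"
proof (cases "c \<le> 0")
  case True
  have "chi k h \<ge> 0" using k h by (simp add: chi_def)
  moreover have "c * h \<le> 0" using True h by (simp add: mult_nonpos_nonneg)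
  moreover have "chi k ((max 0 c) powr k) = 0" using True k by (simp add: chi_def)
  ultimately show ?thesis using True by simp
next
  case False
  then have c: "c > 0" by simp
  have e: "k * (1 + 1/k) = k + 1" using k by (simp add: field_simps)
  have "chi k (c powr k) = k/(k+1) * c powr (k+1)"
    unfolding chi_def by (simp add: powr_powr e)
  moreover have "c * c powr k = c powr (k+1)" using c by (simp add: powr_add)
  ultimately have lhs: "chi k (c powr k) - c * c powr k = - (c powr (k+1) / (k+1))"
    using k by (simp add: field_simps)
  have "h * c \<le> h powr (1 + 1/k) / (1 + 1/k) + c powr (k+1) / (k+1)"
    by (rule Youngs_inequality) (use k h c in \<open>auto simp: field_simps\<close>)
  moreover have "h powr (1 + 1/k) / (1 + 1/k) = chi k h"
    unfolding chi_def using k by (simp add: field_simps)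
  ultimately show ?thesis using lhs c by (simp add: max_def mult.commute)
qed



definition muf :: "real \<Rightarrow> phase \<Rightarrow> real^3 \<Rightarrow> real" where
  "muf k f x = Phi k (enn2real (rho f x))"
definition gfun :: "real \<Rightarrow> phase \<Rightarrow> phase" where
  "gfun k f x v = prof k (muf k f x) v"

lemma muf_range: "k > 0 \<Longrightarrow> muf k f x \<in> {mu0 k..1}"
  unfolding muf_def using Phi_props by blast

lemma muf_meas: assumes "k > 0" "meas_phase f" shows "muf k f \<in> borel_measurable borel"
proof -
  have "(\<lambda>x. Phi k (enn2real (rho f x))) \<in> borel_measurable borel"
    by (rule measurable_compose[OF _ Phi_meas[OF assms(1)]]) (use rho_meas[OF assms(2)] in measurable)
  then show ?thesis unfolding muf_def[abs_def] .
qed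

lemma rho_gfun:
  assumes k: "k > 0" and f: "f \<in> Aset M \<beta>"
  shows "rho (gfun k f) x = rho f x"
proof -
  let ?m = "muf k f x"
  have r1: "rho f x \<le> 1" using f by (simp add: Aset_def)
  have m: "?m \<ge> mu0 k" using muf_range[OF k] by simp
  have "rho (gfun k f) x = (\<integral>\<^sup>+ v. ennreal (sv v * prof k ?m v) \<partial>lborel)"
    unfolding rho_def gfun_def sv_def ..
  also have "\<dots> = ennreal (FF k ?m)"
    unfolding FF_def
    by (rule nn_integral_eq_integral[OF integrable_prof[OF k m mu0_pos[OF k]]])
       (auto intro!: AE_I2 mult_nonneg_nonneg simp: prof_nonneg order_trans[OF zero_le_one sv_ge1])
  also have "FF k ?m = clmp (enn2real (rho f x))"
    unfolding muf_def using Phi_props(2)[OF k] .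
  also have "clmp (enn2real (rho f x)) = enn2real (rho f x)"
  proof -
    have "enn2real (rho f x) \<le> 1" using r1
      using enn2real_mono[of "rho f x" 1] by simp
    then show ?thesis by (simp add: clmp_def)
  qed
  also have "ennreal (enn2real (rho f x)) = rho f x"
  proof -
    have "rho f x < top" using r1 ennreal_one_less_top by (rule le_less_trans)
    then show ?thesis by (simp add: ennreal_enn2real less_top)
  qed
  finally show ?thesis .
qed

lemma rho_gfun_eq: "k > 0 \<Longrightarrow> f \<in> Aset M \<beta> \<Longrightarrow> rho (gfun k f) = rho f"
  using rho_gfun by blast

lemma gfun_meas: assumes k: "k > 0" and f: "meas_phase f" shows "meas_phase (gfun k f)"
proof -
  note [measurable] = muf_meas[OF k f]
  have "(\<lambda>(x,v). prof k (muf k f x) v) \<in> borel_measurable (lborel \<Otimes>\<^sub>M lborel)"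
    unfolding prof_def by measurable
  then show ?thesis unfolding meas_phase_def gfun_def lborel_prod by simp
qed

lemma gfun_sph:
  assumes "sph_sym f" "meas_phase f" shows "sph_sym (gfun k f)"
  unfolding sph_sym_def gfun_def
proof (intro ballI allI)
  fix A x v assume A: "A \<in> SO3"
  have "muf k f (A *v x) = muf k f x" unfolding muf_def using rho_rot[OF assms A] by simp
  moreover have "sv (A *v v) = sv v" unfolding sv_def using norm_rot[OF A] by simp
  ultimately show "prof k (muf k f (A *v x)) (A *v v) = prof k (muf k f x) v"
    unfolding prof_def by simp
qed

lemma gfun_bounds: "k > 0 \<Longrightarrow> 0 \<le> gfun k f x v \<and> gfun k f x v \<le> 1"
proof -
  assume k: "k > 0"
  have "muf k f x \<ge> 0" using muf_range[OF k, of f x] mu0_pos[OF k] by simp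
  then show ?thesis unfolding gfun_def using prof_nonneg prof_le1[OF k] by blast
qed

lemma gfun_Aset:
  assumes k: "k > 0" and f: "f \<in> Aset M \<beta>"
  shows "gfun k f \<in> Aset M \<beta>"
proof -
  have eq: "rho (gfun k f) = rho f" using rho_gfun_eq[OF k f] .
  have "mass_in (gfun k f) = mass_in f" unfolding mass_in_def[abs_def] eq ..
  moreover have "total_mass (gfun k f) = total_mass f" unfolding total_mass_def eq ..
  moreover have "meas_phase f" "sph_sym f" using f by (auto simp: Aset_def)
  ultimately show ?thesis using f gfun_meas[OF k] gfun_sph gfun_bounds[OF k] eq
    by (auto simp: Aset_def)
qed

lemma P0_ge: assumes k: "k > 0" and b: "\<beta> < 1/2" "0 < \<beta>" shows "P0 k M \<beta> \<ge> 8 * (k + 1)"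
proof -
  have "64 * (k+1)\<^sup>2 \<le> 64 * (k + 1)\<^sup>2 / (1 - 2 * \<beta>)"
    using b k by (simp add: field_simps)
  moreover have "8 * (k+1) * 1 \<le> 64 * (k+1) * (k + 1)" using k by (intro mult_mono) auto
  then have "8 * (k+1) \<le> 64 * (k+1)\<^sup>2" by (simp only: power2_eq_square mult.assoc mult_1_right)
  moreover have "64 * (k + 1)\<^sup>2 / (1 - 2 * \<beta>) \<le> P0 k M \<beta>" unfolding P0_def by simp
  ultimately show ?thesis by linarith
qed

lemma gfun_tail:
  assumes k: "k > 0" and b: "\<beta> < 1/2" "0 < \<beta>" and P: "P \<ge> P0 k M \<beta> + 1"
    and v: "norm v \<ge> P + 1"
  shows "gfun k f x v = 0"
proof -
  have "norm v \<ge> 8 * (k+1)" using P0_ge[OF k b, of M] P v by linarith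
  then have s: "sv v \<ge> 8 * (k + 1)" using sv_ge_norm[of v] by linarith
  have m: "muf k f x \<ge> 1 / (8 * (k+1))" using muf_range[OF k] by (simp add: mu0_def)
  have m0: "muf k f x \<ge> 0" using muf_range[OF k, of f x] mu0_pos[OF k] by simp
  have "1 = 1 / (8 * (k+1)) * (8 * (k + 1))" using k by simp
  also have "\<dots> \<le> muf k f x * sv v" using m s k m0 by (intro mult_mono) auto
  finally show ?thesis unfolding gfun_def by (rule prof_zero)
qed



lemma ereal_fin:
  fixes a b c d :: ennreal
  assumes le: "a + d \<le> c + b" and b: "b < top" and d: "d < top"
  shows "enn2ereal a - enn2ereal b \<le> enn2ereal c - enn2ereal d"
proof (cases c rule: ennreal_cases)
  case top
  then show ?thesis using d by (cases d rule: ennreal_cases) auto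
next
  case (real c')
  then have cb: "c + b < top" using b by (simp add: less_top[symmetric])
  have "a + d < top" using le cb by (rule le_less_trans)
  then have a: "a < top" by (simp add: less_top[symmetric])
  obtain a' where a': "a = ennreal a'" "a' \<ge> 0" using a by (cases a rule: ennreal_cases) auto
  obtain b' where b': "b = ennreal b'" "b' \<ge> 0" using b by (cases b rule: ennreal_cases) auto
  obtain d' where d': "d = ennreal d'" "d' \<ge> 0" using d by (cases d rule: ennreal_cases) auto
  have "ennreal (a' + d') \<le> ennreal (c' + b')" using le a' b' d' real by (simp add: ennreal_plus)
  then have "a' + d' \<le> c' + b'" using real b' by (subst (asm) ennreal_le_iff) auto
  then show ?thesis using a' b' d' real by (simp add: enn2ereal_ennreal)
qed

lemma mass_le_total: "mass_in f r \<le> total_mass f"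
  unfolding mass_in_def total_mass_def
  by (intro nn_integral_mono) (auto simp: indicator_def)

lemma mass_mono: "r1 \<le> r2 \<Longrightarrow> mass_in f r1 \<le> mass_in f r2"
  unfolding mass_in_def
  by (intro nn_integral_mono) (auto simp: indicator_def)

definition mr :: "phase \<Rightarrow> real \<Rightarrow> real" where "mr f r = enn2real (mass_in f r)"

lemma mr_meas:
  assumes f: "f \<in> Aset M \<beta>"
  shows "mr f \<in> borel_measurable borel"
proof -
  have tm: "total_mass f = ennreal M" using f by (simp add: Aset_def)
  have "mono (mr f)"
  proof (rule monoI)
    fix r1 r2 :: real assume "r1 \<le> r2"
    moreover have "mass_in f r2 < top"
      using mass_le_total[of f r2] tm by (simp add: le_less_trans)
    ultimately show "mr f r1 \<le> mr f r2"
      unfolding mr_def using mass_mono enn2real_mono by blast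
  qed
  then show ?thesis by (rule borel_measurable_mono)
qed

lemma E_meas:
  assumes f: "f \<in> Aset M \<beta>"
  shows "exp_lambda f \<in> borel_measurable borel"
proof -
  note [measurable] = mr_meas[OF f]
  have "(\<lambda>r. if r > 0 then 1 / sqrt (1 - 2 * mr f r / r) else 1) \<in> borel_measurable borel"
    by measurable
  moreover have "exp_lambda f = (\<lambda>r. if r > 0 then 1 / sqrt (1 - 2 * mr f r / r) else 1)"
    unfolding exp_lambda_def[abs_def] mr_def ..
  ultimately show ?thesis by simp
qed

lemma E_bounds:
  assumes f: "f \<in> Aset M \<beta>" and b: "0 < \<beta>" "\<beta> < 1/2"
  shows "1 \<le> exp_lambda f r \<and> exp_lambda f r \<le> 1 / sqrt (1 - 2 * \<beta>)"
proof (cases "r > 0")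
  case False
  have "sqrt (1 - 2 * \<beta>) \<le> 1" using b by simp
  moreover have "sqrt (1 - 2 * \<beta>) > 0" using b by simp
  ultimately have "1 \<le> 1 / sqrt (1 - 2 * \<beta>)" by (simp add: field_simps)
  then show ?thesis using False by (simp add: exp_lambda_def)
next
  case True
  have "mass_in f r \<le> ennreal (\<beta> * r)" using f True by (simp add: Aset_def)
  then have "enn2real (mass_in f r) \<le> enn2real (ennreal (\<beta> * r))"
    by (rule enn2real_mono) simp
  then have m1: "enn2real (mass_in f r) \<le> \<beta> * r" using b True by simp
  have m0: "enn2real (mass_in f r) \<ge> 0" by simp
  define q where "q = 1 - 2 * enn2real (mass_in f r) / r"
  have "enn2real (mass_in f r) / r \<le> \<beta>" using m1 True by (simp add: divide_le_eq mult.commute)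
  then have q1: "q \<ge> 1 - 2 * \<beta>" unfolding q_def by simp
  have q2: "q \<le> 1" unfolding q_def using m0 True by simp
  have qp: "q > 0" using q1 b by simp
  have s1: "sqrt q \<le> 1" using q2 by simp
  have s2: "sqrt (1 - 2 * \<beta>) \<le> sqrt q" using q1 by simp
  have s0: "sqrt (1 - 2 * \<beta>) > 0" using b by simp
  have "1 \<le> 1 / sqrt q" using s1 qp by (simp add: field_simps)
  moreover have "1 / sqrt q \<le> 1 / sqrt (1 - 2 * \<beta>)" using s2 s0 by (simp add: frac_le)
  ultimately show ?thesis using True by (simp add: exp_lambda_def q_def)
qed

lemma chi_nonneg: "k > 0 \<Longrightarrow> chi k y \<ge> 0"
  by (simp add: chi_def)

lemma chi_meas[measurable]: "chi k \<in> borel_measurable borel"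
  unfolding chi_def[abs_def] by measurable

lemma pw_real:
  fixes \<mu> s :: real
  assumes k: "k > 0" and e: "e \<ge> 0" and h: "h \<ge> 0"
  defines "g \<equiv> (max 0 (1 - \<mu> * s)) powr k"
  shows "e * chi k g + e * h + e * \<mu> * (s * g) \<le> e * chi k h + e * g + e * \<mu> * (s * h)"
proof -
  have "chi k g - (1 - \<mu> * s) * g \<le> chi k h - (1 - \<mu> * s) * h"
    unfolding g_def by (rule young_chi[OF k h])
  then have "e * (chi k g - (1 - \<mu> * s) * g) \<le> e * (chi k h - (1 - \<mu> * s) * h)"
    using e by (rule mult_left_mono)
  then show ?thesis by (simp add: algebra_simps)
qed



lemma pair_meas2: "meas_phase q \<Longrightarrow> (\<lambda>p. q (fst p) (snd p)) \<in> borel_measurable (lborel \<Otimes>\<^sub>M lborel)"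
  using meas_pair[of q] by (simp add: split_beta')

lemma B_fin:
  assumes q: "q \<in> Aset M \<beta>" and f: "f \<in> Aset M \<beta>" and b: "0 < \<beta>" "\<beta> < 1/2"
  shows "(\<integral>\<^sup>+ x. \<integral>\<^sup>+ v. ennreal (exp_lambda f (norm x) * q x v) \<partial>lborel \<partial>lborel) < top"
proof -
  define C where "C = 1 / sqrt (1 - 2 * \<beta>)"
  have C0: "C \<ge> 0" unfolding C_def using b by simp
  have qm: "meas_phase q" and q0: "\<And>x v. q x v \<ge> 0" and tm: "total_mass q = ennreal M"
    using q by (auto simp: Aset_def)
  have inner: "(\<integral>\<^sup>+ v. ennreal (exp_lambda f (norm x) * q x v) \<partial>lborel) \<le> ennreal C * rho q x" for x
  proof -
    have "(\<integral>\<^sup>+ v. ennreal (exp_lambda f (norm x) * q x v) \<partial>lborel)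
        \<le> (\<integral>\<^sup>+ v. ennreal C * ennreal (sqrt (1 + (norm v)\<^sup>2) * q x v) \<partial>lborel)"
    proof (rule nn_integral_mono)
      fix v
      have E: "exp_lambda f (norm x) \<le> C" using E_bounds[OF f b] unfolding C_def by blast
      have "exp_lambda f (norm x) * q x v \<le> C * q x v" using E q0[of x v] by (rule mult_right_mono)
      also have "\<dots> \<le> C * (sqrt (1 + (norm v)\<^sup>2) * q x v)"
        using C0 q0[of x v] by (intro mult_left_mono) (auto intro: mult_right_le_one_le order_trans[OF _ mult_right_mono[of 1]])
      finally show "ennreal (exp_lambda f (norm x) * q x v) \<le> ennreal C * ennreal (sqrt (1 + (norm v)\<^sup>2) * q x v)"
        using C0 by (simp add: ennreal_mult'[symmetric] ennreal_leI)
    qed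
    also have "\<dots> = ennreal C * rho q x"
      unfolding rho_def using meas_slice[OF qm, of x] by (subst nn_integral_cmult) auto
    finally show ?thesis .
  qed
  have "(\<integral>\<^sup>+ x. \<integral>\<^sup>+ v. ennreal (exp_lambda f (norm x) * q x v) \<partial>lborel \<partial>lborel) \<le> (\<integral>\<^sup>+ x. ennreal C * rho q x \<partial>lborel)"
    by (rule nn_integral_mono) (rule inner)
  also have "\<dots> = ennreal C * total_mass q"
    unfolding total_mass_def using rho_meas[OF qm] by (subst nn_integral_cmult) auto
  also have "\<dots> < top" using tm by (simp add: ennreal_mult_less_top)
  finally show ?thesis .
qed



lemma ennreal_sum3:
  fixes a b c d :: real
  assumes "a \<ge> 0" "b \<ge> 0" "c \<ge> 0" "d \<ge> 0"
  shows "ennreal a + ennreal b + ennreal c * ennreal d = ennreal (a + b + c * d)"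
proof -
  have "ennreal c * ennreal d = ennreal (c * d)" using assms(3,4) by (rule ennreal_mult[symmetric])
  moreover have "ennreal a + ennreal b = ennreal (a + b)" using assms(1,2) by (rule ennreal_plus[symmetric])
  moreover have "ennreal (a + b) + ennreal (c * d) = ennreal (a + b + c * d)"
    using assms by (intro ennreal_plus[symmetric]) auto
  ultimately show ?thesis by simp
qed

lemma inner_ineq:
  assumes k: "k > 0" and f: "f \<in> Aset M \<beta>" and e: "e \<ge> 0"
  shows "(\<integral>\<^sup>+ v. ennreal (e * chi k (gfun k f x v)) \<partial>lborel) + (\<integral>\<^sup>+ v. ennreal (e * f x v) \<partial>lborel)
    \<le> (\<integral>\<^sup>+ v. ennreal (e * chi k (f x v)) \<partial>lborel) + (\<integral>\<^sup>+ v. ennreal (e * gfun k f x v) \<partial>lborel)"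
proof -
  define \<mu> where "\<mu> = muf k f x"
  define g where "g = gfun k f x"
  have fm: "meas_phase f" and f0: "\<And>x v. f x v \<ge> 0" using f by (auto simp: Aset_def)
  note [measurable] = meas_slice[OF fm, of x]
  have gm[measurable]: "g \<in> borel_measurable borel" unfolding g_def gfun_def[abs_def] by simp
  have mu0: "\<mu> \<ge> 0" unfolding \<mu>_def using muf_range[OF k, of f x] mu0_pos[OF k] by simp
  have g0: "g v \<ge> 0" for v unfolding g_def using gfun_bounds[OF k] by blast
  let ?S = "\<lambda>v::real^3. sqrt (1 + (norm v)\<^sup>2)"
  have pw: "ennreal (e * chi k (g v)) + ennreal (e * f x v) + ennreal (e * \<mu>) * ennreal (?S v * g v)
      \<le> ennreal (e * chi k (f x v)) + ennreal (e * g v) + ennreal (e * \<mu>) * ennreal (?S v * f x v)" for v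
  proof -
    have gv: "g v = (max 0 (1 - \<mu> * ?S v)) powr k" unfolding g_def gfun_def prof_def sv_def \<mu>_def ..
    have r: "e * chi k (g v) + e * f x v + (e * \<mu>) * (?S v * g v) \<le> e * chi k (f x v) + e * g v + (e * \<mu>) * (?S v * f x v)"
      unfolding gv by (rule pw_real[OF k e f0])
    have n1: "e * chi k (g v) \<ge> 0" "e * f x v \<ge> 0" "e * \<mu> \<ge> 0" "?S v * g v \<ge> 0"
      using e chi_nonneg[OF k] f0[of x v] mu0 g0[of v] by auto
    have n2: "e * chi k (f x v) \<ge> 0" "e * g v \<ge> 0" "?S v * f x v \<ge> 0"
      using e chi_nonneg[OF k] f0[of x v] g0[of v] by auto
    have "ennreal (e * chi k (g v)) + ennreal (e * f x v) + ennreal (e * \<mu>) * ennreal (?S v * g v)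
        = ennreal (e * chi k (g v) + e * f x v + e * \<mu> * (?S v * g v))"
      using n1 by (rule ennreal_sum3)
    also have "\<dots> \<le> ennreal (e * chi k (f x v) + e * g v + e * \<mu> * (?S v * f x v))"
      using r by (rule ennreal_leI)
    also have "\<dots> = ennreal (e * chi k (f x v)) + ennreal (e * g v) + ennreal (e * \<mu>) * ennreal (?S v * f x v)"
      using n2(1,2) n1(3) n2(3) by (rule ennreal_sum3[symmetric])
    finally show ?thesis .
  qed
  have cmg: "(\<integral>\<^sup>+ v. ennreal (e * \<mu>) * ennreal (?S v * g v) \<partial>lborel) = ennreal (e * \<mu>) * (\<integral>\<^sup>+ v. ennreal (?S v * g v) \<partial>lborel)"
    by (rule nn_integral_cmult) measurable
  have cmf: "(\<integral>\<^sup>+ v. ennreal (e * \<mu>) * ennreal (?S v * f x v) \<partial>lborel) = ennreal (e * \<mu>) * (\<integral>\<^sup>+ v. ennreal (?S v * f x v) \<partial>lborel)"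
    by (rule nn_integral_cmult) measurable
  have L: "(\<integral>\<^sup>+ v. ennreal (e * chi k (g v)) + ennreal (e * f x v) + ennreal (e * \<mu>) * ennreal (?S v * g v) \<partial>lborel)
     = (\<integral>\<^sup>+ v. ennreal (e * chi k (g v)) \<partial>lborel) + (\<integral>\<^sup>+ v. ennreal (e * f x v) \<partial>lborel) + ennreal (e * \<mu>) * rho g' x"
    if "g' = gfun k f" for g'
    unfolding that rho_def g_def[symmetric]
    by (subst nn_integral_add, measurable)+ (simp only: cmg)
  have R: "(\<integral>\<^sup>+ v. ennreal (e * chi k (f x v)) + ennreal (e * g v) + ennreal (e * \<mu>) * ennreal (?S v * f x v) \<partial>lborel)
     = (\<integral>\<^sup>+ v. ennreal (e * chi k (f x v)) \<partial>lborel) + (\<integral>\<^sup>+ v. ennreal (e * g v) \<partial>lborel) + ennreal (e * \<mu>) * rho f x"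
    unfolding rho_def
    by (subst nn_integral_add, measurable)+ (simp only: cmf)
  have "(\<integral>\<^sup>+ v. ennreal (e * chi k (g v)) \<partial>lborel) + (\<integral>\<^sup>+ v. ennreal (e * f x v) \<partial>lborel) + ennreal (e * \<mu>) * rho f x
     \<le> (\<integral>\<^sup>+ v. ennreal (e * chi k (f x v)) \<partial>lborel) + (\<integral>\<^sup>+ v. ennreal (e * g v) \<partial>lborel) + ennreal (e * \<mu>) * rho f x"
  proof -
    have "(\<integral>\<^sup>+ v. ennreal (e * chi k (g v)) + ennreal (e * f x v) + ennreal (e * \<mu>) * ennreal (?S v * g v) \<partial>lborel)
      \<le> (\<integral>\<^sup>+ v. ennreal (e * chi k (f x v)) + ennreal (e * g v) + ennreal (e * \<mu>) * ennreal (?S v * f x v) \<partial>lborel)"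
      by (rule nn_integral_mono) (rule pw)
    then show ?thesis unfolding L[OF refl] R rho_gfun[OF k f] .
  qed
  moreover have "ennreal (e * \<mu>) * rho f x < top"
  proof -
    have "rho f x \<le> 1" using f by (simp add: Aset_def)
    then have "rho f x < top" using ennreal_one_less_top by (rule le_less_trans)
    then show ?thesis by (simp add: ennreal_mult_less_top)
  qed
  ultimately show ?thesis unfolding g_def
    using ennreal_add_left_cancel_le by (simp add: ac_simps) (metis less_irrefl)
qed



lemma outer_meas:
  assumes q: "meas_phase q" and phi: "\<phi> \<in> borel_measurable borel" and Ef: "Ef \<in> borel_measurable borel"
  shows "(\<lambda>x. \<integral>\<^sup>+ v. ennreal (Ef (norm x) * \<phi> (q x v)) \<partial>lborel) \<in> borel_measurable lborel"
proof -
  note [measurable] = pair_meas2[OF q] phi Ef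
  have "(\<lambda>p. ennreal (Ef (norm (fst p)) * \<phi> (q (fst p) (snd p)))) \<in> borel_measurable (lborel \<Otimes>\<^sub>M lborel)"
    by measurable
  then have "case_prod (\<lambda>x v. ennreal (Ef (norm x) * \<phi> (q x v))) \<in> borel_measurable (lborel \<Otimes>\<^sub>M lborel)"
    by (simp add: split_beta')
  then show ?thesis by (rule lborel.borel_measurable_nn_integral)
qed

theorem corollary3p3:
  fixes k M \<beta> :: real and f :: phase
  assumes "k > 0" and "M > 0" and "0 < \<beta>" and "\<beta> < 1/2"
    and "\<forall>x v. f x v \<ge> 0" and "sph_sym f" and "f \<in> Aset M \<beta>"
  shows "\<exists>g :: phase. (\<forall>x v. g x v \<ge> 0) \<and> sph_sym g \<and> meas_phase g
     \<and> rho g = rho f \<and> g \<in> Aset M \<beta>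
     \<and> Dfun k g \<le> Dfun k f
     \<and> (\<forall>x v. g x v \<le> 1)
     \<and> (\<forall>P \<ge> P0 k M \<beta> + 1.
          (\<integral>\<^sup>+ x. \<integral>\<^sup>+ v. indicator {v. norm v \<ge> P + 1} v
              * ennreal (sqrt (1 + (norm v)\<^sup>2) * g x v) \<partial>lborel \<partial>lborel)
          \<le> ennreal (2 / P powr (1/4)))"
proof -
  have k: "k > 0" and b: "0 < \<beta>" "\<beta> < 1/2" and f: "f \<in> Aset M \<beta>" using assms by auto
  have fm: "meas_phase f" and fs: "sph_sym f" and f0: "\<And>x v. f x v \<ge> 0" using f by (auto simp: Aset_def)
  define g where "g = gfun k f"
  have gA: "g \<in> Aset M \<beta>" unfolding g_def by (rule gfun_Aset[OF k f])
  have gm: "meas_phase g" and gs: "sph_sym g" and g0: "\<And>x v. g x v \<ge> 0"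
    using gA by (auto simp: Aset_def)
  have g1: "\<And>x v. g x v \<le> 1" unfolding g_def using gfun_bounds[OF k] by blast
  have req: "rho g = rho f" unfolding g_def by (rule rho_gfun_eq[OF k f])
  have mq: "mass_in g = mass_in f" unfolding mass_in_def[abs_def] req ..
  have Eeq: "exp_lambda g = exp_lambda f" unfolding exp_lambda_def[abs_def] mq ..
  note Em = E_meas[OF f]
  have E0: "exp_lambda f r \<ge> 0" for r using E_bounds[OF f b, of r] by linarith
  define Ig where "Ig x = (\<integral>\<^sup>+ v. ennreal (exp_lambda f (norm x) * chi k (g x v)) \<partial>lborel)" for x
  define If where "If x = (\<integral>\<^sup>+ v. ennreal (exp_lambda f (norm x) * chi k (f x v)) \<partial>lborel)" for x
  define Jg where "Jg x = (\<integral>\<^sup>+ v. ennreal (exp_lambda f (norm x) * g x v) \<partial>lborel)" for x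
  define Jf where "Jf x = (\<integral>\<^sup>+ v. ennreal (exp_lambda f (norm x) * f x v) \<partial>lborel)" for x
  have mIg: "Ig \<in> borel_measurable lborel" unfolding Ig_def[abs_def] by (rule outer_meas[OF gm chi_meas Em])
  have mIf: "If \<in> borel_measurable lborel" unfolding If_def[abs_def] by (rule outer_meas[OF fm chi_meas Em])
  have mJg: "Jg \<in> borel_measurable lborel"
    using outer_meas[OF gm _ Em, of "\<lambda>y. y"] unfolding Jg_def[abs_def] by simp
  have mJf: "Jf \<in> borel_measurable lborel"
    using outer_meas[OF fm _ Em, of "\<lambda>y. y"] unfolding Jf_def[abs_def] by simp
  have pw: "Ig x + Jf x \<le> If x + Jg x" for x
    unfolding Ig_def Jf_def If_def Jg_def g_def by (rule inner_ineq[OF k f E0])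
  have "(\<integral>\<^sup>+ x. Ig x \<partial>lborel) + (\<integral>\<^sup>+ x. Jf x \<partial>lborel) = (\<integral>\<^sup>+ x. Ig x + Jf x \<partial>lborel)"
    using mIg mJf by (rule nn_integral_add[symmetric])
  also have "\<dots> \<le> (\<integral>\<^sup>+ x. If x + Jg x \<partial>lborel)" by (rule nn_integral_mono) (rule pw)
  also have "\<dots> = (\<integral>\<^sup>+ x. If x \<partial>lborel) + (\<integral>\<^sup>+ x. Jg x \<partial>lborel)"
    using mIf mJg by (rule nn_integral_add)
  finally have main: "(\<integral>\<^sup>+ x. Ig x \<partial>lborel) + (\<integral>\<^sup>+ x. Jf x \<partial>lborel) \<le> (\<integral>\<^sup>+ x. If x \<partial>lborel) + (\<integral>\<^sup>+ x. Jg x \<partial>lborel)" .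
  have Bg: "(\<integral>\<^sup>+ x. Jg x \<partial>lborel) < top" unfolding Jg_def by (rule B_fin[OF gA f b])
  have Bf: "(\<integral>\<^sup>+ x. Jf x \<partial>lborel) < top" unfolding Jf_def by (rule B_fin[OF f f b])
  have D: "Dfun k g \<le> Dfun k f"
    unfolding Dfun_def Eeq using ereal_fin[OF main Bg Bf] unfolding Ig_def If_def Jg_def Jf_def .
  have tail: "(\<integral>\<^sup>+ x. \<integral>\<^sup>+ v. indicator {v. norm v \<ge> P + 1} v
              * ennreal (sqrt (1 + (norm v)\<^sup>2) * g x v) \<partial>lborel \<partial>lborel)
          \<le> ennreal (2 / P powr (1/4))" if P: "P \<ge> P0 k M \<beta> + 1" for P
  proof -
    have "indicator {v. norm v \<ge> P + 1} v * ennreal (sqrt (1 + (norm v)\<^sup>2) * g x v) = 0" for x v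
    proof (cases "norm v \<ge> P + 1")
      case True
      then have "g x v = 0" unfolding g_def by (rule gfun_tail[OF k b(2,1) P])
      then show ?thesis by simp
    qed simp
    note z = this
    have "(\<integral>\<^sup>+ x. \<integral>\<^sup>+ v. indicator {v. norm v \<ge> P + 1} v
              * ennreal (sqrt (1 + (norm v)\<^sup>2) * g x v) \<partial>lborel \<partial>lborel) = 0"
      by (simp only: z) simp
    then show ?thesis by simp
  qed
  show ?thesis
    using g0 gs gm req gA D g1 tail by blast
qed


end
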